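(* Let $\boldsymbol{\omega}:\mathbb{R}^3\to\mathbb{R}^3$ be a smooth divergence-free vorticity field, let $\boldsymbol{a},\boldsymbol{c}\in\mathbb{R}^3$, and let $\boldsymbol{B}$ be a vortex filament, i.e. a closed streamline of $\boldsymbol{\omega}$ parametrized by a $T$-periodic curve $\boldsymbol{\gamma}:\mathbb{R}\to\mathbb{R}^3$ with $\boldsymbol{\gamma}'(s)=\boldsymbol{\omega}(\boldsymbol{\gamma}(s))$, with $\boldsymbol{a},\boldsymbol{c}\notin\boldsymbol{B}$ and $\boldsymbol{a}\neq\boldsymbol{c}$. With $D$ as defined in the context, \[\int_0^T D(\boldsymbol{a},\boldsymbol{\gamma}(s),\boldsymbol{c})\,ds=-\int_0^T D(\boldsymbol{c},\boldsymbol{\gamma}(s),\boldsymbol{a})\,ds,\] that is, in coordinates advecting with the fluid, $\boldsymbol{a}$'s action on $\boldsymbol{B}$ affects the interaction energy between $\boldsymbol{B}$ and $\boldsymbol{c}$ in an exactly equal and opposite way as $\boldsymbol{c}$'s action on $\boldsymbol{B}$ affects the interaction energy between $\boldsymbol{a}$ and $\boldsymbol{B}$.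
   Context: Interaction energy: for vorticity vectors $\boldsymbol{\beta},\boldsymbol{\gamma}_0\in\mathbb{R}^3$ at points $\boldsymbol{b},\boldsymbol{c}$ (distinct), \[I(\boldsymbol{\beta},\boldsymbol{\gamma}_0,\boldsymbol{c}-\boldsymbol{b})=\frac{1}{16\pi\|\boldsymbol{c}-\boldsymbol{b}\|}\Big[\boldsymbol{\beta}\cdot\boldsymbol{\gamma}_0+\frac{(\boldsymbol{\beta}\cdot(\boldsymbol{c}-\boldsymbol{b}))(\boldsymbol{\gamma}_0\cdot(\boldsymbol{c}-\boldsymbol{b}))}{\|\boldsymbol{c}-\boldsymbol{b}\|^2}\Big]\] (this is the contribution of the pair to the kinetic energy $\frac12\int\|\boldsymbol{u}\|^2$ obtained via the Biot–Savart law). The velocity induced at a point $\boldsymbol{b}$ by the vorticity at $\boldsymbol{a}$ is $\boldsymbol{v}_{\boldsymbol{a}}(\boldsymbol{b})=\frac{1}{4\pi}\frac{\boldsymbol{\omega}(\boldsymbol{a})\times(\boldsymbol{b}-\boldsymbol{a})}{\|\boldsymbol{a}-\boldsymbol{b}\|^3}$. Under the vorticity form of the 3D Euler equations (in coordinates advecting with the fluid), this velocity moves $\boldsymbol{b}$ at rate $\boldsymbol{v}_{\boldsymbol{a}}(\boldsymbol{b})$ and changes the vorticity at $\boldsymbol{b}$ at rate $(\boldsymbol{\omega}(\boldsymbol{b})\cdot\nabla_{\boldsymbol{b}})\boldsymbol{v}_{\boldsymbol{a}}(\boldsymbol{b})$. The effect of $\boldsymbol{a}$'s action on $\boldsymbol{b}$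 on the interaction energy between $\boldsymbol{b}$ and $\boldsymbol{c}$ is the resulting rate of change of $I(\boldsymbol{\omega}(\boldsymbol{b}),\boldsymbol{\omega}(\boldsymbol{c}),\boldsymbol{c}-\boldsymbol{b})$ with $\boldsymbol{c},\boldsymbol{\omega}(\boldsymbol{c})$ held fixed: \[D(\boldsymbol{a},\boldsymbol{b},\boldsymbol{c})=\nabla_{\boldsymbol{b}}I(\boldsymbol{\beta},\boldsymbol{\omega}(\boldsymbol{c}),\boldsymbol{c}-\boldsymbol{b})\big|_{\boldsymbol{\beta}=\boldsymbol{\omega}(\boldsymbol{b})}\cdot\boldsymbol{v}_{\boldsymbol{a}}(\boldsymbol{b})+\nabla_{\boldsymbol{\beta}}I(\boldsymbol{\beta},\boldsymbol{\omega}(\boldsymbol{c}),\boldsymbol{c}-\boldsymbol{b})\big|_{\boldsymbol{\beta}=\boldsymbol{\omega}(\boldsymbol{b})}\cdot\big((\boldsymbol{\omega}(\boldsymbol{b})\cdot\nabla_{\boldsymbol{b}})\boldsymbol{v}_{\boldsymbol{a}}(\boldsymbol{b})\big),\] where in the first term the gradient in the position $\boldsymbol{b}$ is taken with the vorticity argument $\boldsymbol{\beta}$ held fixed. *)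

theory Defs
  imports "HOL-Analysis.Analysis" "HOL-Analysis.Cross3"
begin

definition grad :: "(real^3 \<Rightarrow> real) \<Rightarrow> real^3 \<Rightarrow> real^3" where
  "grad f x = (THE g. GDERIV f x :> g)"

fun iter_partial :: "(3) list \<Rightarrow> (real^3 \<Rightarrow> real^3) \<Rightarrow> real^3 \<Rightarrow> real^3" where
  "iter_partial [] f = f"
| "iter_partial (i # is) f =
     (\<lambda>x. frechet_derivative (iter_partial is f) (at x) (axis i 1))"

definition smooth3 :: "(real^3 \<Rightarrow> real^3) \<Rightarrow> bool" where
  "smooth3 f \<longleftrightarrow> (\<forall>is x. iter_partial is f differentiable (at x))"

definition div_free :: "(real^3 \<Rightarrow> real^3) \<Rightarrow> bool" where
  "div_free f \<longleftrightarrow> (\<forall>x. (\<Sum>i\<in>UNIV. frechet_derivative f (at x) (axis i 1) $ i) = 0)"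

definition inter_energy :: "real^3 \<Rightarrow> real^3 \<Rightarrow> real^3 \<Rightarrow> real" where
  "inter_energy \<beta> \<gamma>0 r =
     1 / (16 * pi * norm r) * (\<beta> \<bullet> \<gamma>0 + (\<beta> \<bullet> r) * (\<gamma>0 \<bullet> r) / (norm r)\<^sup>2)"

definition ind_vel :: "(real^3 \<Rightarrow> real^3) \<Rightarrow> real^3 \<Rightarrow> real^3 \<Rightarrow> real^3" where
  "ind_vel \<omega> a b = (1 / (4 * pi * (norm (a - b)) ^ 3)) *\<^sub>R cross3 (\<omega> a) (b - a)"

text \<open>D(a,b,c).  The term (omega(b).nabla) v_a(b) is the directional derivative of
  v_a at b in direction omega(b).\<close>
definition Dact :: "(real^3 \<Rightarrow> real^3) \<Rightarrow> real^3 \<Rightarrow> real^3 \<Rightarrow> real^3 \<Rightarrow> real" where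
  "Dact \<omega> a b c =
     grad (\<lambda>x. inter_energy (\<omega> b) (\<omega> c) (c - x)) b \<bullet> ind_vel \<omega> a b
   + grad (\<lambda>\<beta>. inter_energy \<beta> (\<omega> c) (c - b)) (\<omega> b)
       \<bullet> frechet_derivative (ind_vel \<omega> a) (at b) (\<omega> b)"

end

theory Submission
  imports Defs
begin

definition Wv :: "real^3 \<Rightarrow> real^3 \<Rightarrow> real^3" where
  "Wv g r = (1/(16*pi*norm r)) *\<^sub>R g + ((g \<bullet> r)/(16*pi*norm r^3)) *\<^sub>R r"

definition dWv :: "real^3 \<Rightarrow> real^3 \<Rightarrow> real^3 \<Rightarrow> real^3" where
  "dWv g r k = (-(r \<bullet> k)/(16*pi*norm r^3)) *\<^sub>R g + ((g \<bullet> k)/(16*pi*norm r^3)) *\<^sub>R r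
     + ((g \<bullet> r)/(16*pi*norm r^3)) *\<^sub>R k - (3*(g \<bullet> r)*(r \<bullet> k)/(16*pi*norm r^5)) *\<^sub>R r"

lemma inter_energy_Wv: "inter_energy \<beta> g r = \<beta> \<bullet> Wv g r"
  unfolding inter_energy_def Wv_def
  by (cases "r = 0") (auto simp: inner_add_right power2_eq_square power3_eq_cube field_simps)

lemma Wv_deriv:
  assumes "r \<noteq> 0"
  shows "(Wv g has_derivative dWv g r) (at r)"
proof -
  have n: "norm r \<noteq> 0" using assms by simp
  have D: "((\<lambda>r. norm r) has_derivative (\<lambda>h. h \<bullet> sgn r)) (at r)"
    using has_derivative_norm[OF assms] .
  show ?thesis
    unfolding Wv_def[abs_def]
    apply (rule has_derivative_eq_rhs)
     apply (rule derivative_eq_intros D refl | simp add: n assms)+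
    apply (rule ext)
    apply (simp add: dWv_def sgn_div_norm inner_commute field_simps n)
    apply (simp add: eval_nat_numeral field_simps n)
    done
qed

lemma core_id:
  fixes A C b a c \<beta> :: "real^3"
  shows "((c - b) \<bullet> cross3 A (b - a)) * (\<beta> \<bullet> C) - (C \<bullet> cross3 A (b - a)) * (\<beta> \<bullet> (c - b))
   + ((a - b) \<bullet> cross3 C (b - c)) * (\<beta> \<bullet> A) - (A \<bullet> cross3 C (b - c)) * (\<beta> \<bullet> (a - b)) = 0"
  unfolding inner_vec_def
  by (simp add: sum_3 cross3_simps)

lemma antisym_dW:
  fixes g r x y :: "real^3"
  shows "x \<bullet> dWv g r (-y) - y \<bullet> dWv g r (-x) = ((r \<bullet> y) * (x \<bullet> g) - (g \<bullet> y) * (x \<bullet> r)) / (8*pi*norm r^3)"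
  unfolding dWv_def
  by (simp add: inner_add_right inner_diff_right inner_commute field_simps) (simp add: diff_divide_distrib)


lemma grad_works:
  fixes f :: "real^3 \<Rightarrow> real"
  assumes d: "(f has_derivative L) (at x)"
  shows "grad f x \<bullet> u = L u"
proof -
  have lin: "linear L" using d has_derivative_linear by blast
  define G where "G = adjoint L 1"
  have LG: "L = (\<lambda>h. h \<bullet> G)"
    using adjoint_works[OF lin] by (auto simp: G_def inner_real_def)
  have gd: "GDERIV f x :> G" unfolding gderiv_def using d LG by simp
  have uniq: "G' = G" if "GDERIV f x :> G'" for G'
  proof -
    have "(\<lambda>h. h \<bullet> G') = (\<lambda>h. h \<bullet> G)"
      using has_derivative_unique that gd unfolding gderiv_def by blast
    then have "(G' - G) \<bullet> G' = (G' - G) \<bullet> G" by metis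
    then have "(G' - G) \<bullet> (G' - G) = 0" by (simp add: inner_diff_right)
    then show ?thesis by simp
  qed
  have "grad f x = G" unfolding grad_def
    using gd uniq by (rule the_equality)
  then show ?thesis using LG by (simp add: inner_commute)
qed

lemma Dact_formula:
  assumes bc: "b \<noteq> c" and dv: "(ind_vel \<omega> a has_derivative dv) (at b)"
  shows "Dact \<omega> a b c = \<omega> b \<bullet> dWv (\<omega> c) (c - b) (- ind_vel \<omega> a b) + dv (\<omega> b) \<bullet> Wv (\<omega> c) (c - b)"
proof -
  have cb: "c - b \<noteq> 0" using bc by simp
  have d0: "((\<lambda>x. c - x) has_derivative (\<lambda>h. - h)) (at b)"
    by (auto intro!: derivative_eq_intros)
  have d1: "((\<lambda>x. Wv (\<omega> c) (c - x)) has_derivative (\<lambda>h. dWv (\<omega> c) (c - b) (- h))) (at b)"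
    using has_derivative_compose[OF d0 Wv_deriv[OF cb]] by simp
  have d2: "((\<lambda>x. inter_energy (\<omega> b) (\<omega> c) (c - x)) has_derivative
      (\<lambda>h. \<omega> b \<bullet> dWv (\<omega> c) (c - b) (- h))) (at b)"
    unfolding inter_energy_Wv
    by (rule has_derivative_eq_rhs, rule derivative_intros d1)+ auto
  have d3: "((\<lambda>\<beta>. inter_energy \<beta> (\<omega> c) (c - b)) has_derivative
      (\<lambda>h. h \<bullet> Wv (\<omega> c) (c - b))) (at (\<omega> b))"
    unfolding inter_energy_Wv
    by (auto intro!: derivative_eq_intros)
  have fd: "frechet_derivative (ind_vel \<omega> a) (at b) = dv"
    using frechet_derivative_at[OF dv] by simp
  show ?thesis unfolding Dact_def fd grad_works[OF d2] grad_works[OF d3] by simp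
qed


lemma bl_cross3: "bounded_linear (\<lambda>x. cross3 A x)"
  by (rule linear_conv_bounded_linear[THEN iffD1])
     (auto intro!: linearI simp: cross_add_right cross_mult_right)

lemma ind_vel_deriv:
  assumes ab: "b \<noteq> a"
  shows "\<exists>dv. (ind_vel \<omega> a has_derivative dv) (at b)"
proof -
  have ab': "a - b \<noteq> 0" using ab by simp
  have d0: "((\<lambda>x. a - x) has_derivative (\<lambda>h. - h)) (at b)"
    by (auto intro!: derivative_eq_intros)
  have n: "((\<lambda>x. norm (a - x)) has_derivative (\<lambda>h. (- h) \<bullet> sgn (a - b))) (at b)"
    using has_derivative_compose[OF d0 has_derivative_norm[OF ab']] by simp
  have cr: "((\<lambda>x. cross3 (\<omega> a) (x - a)) has_derivative (\<lambda>h. cross3 (\<omega> a) h)) (at b)"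
  proof -
    have "((\<lambda>x. cross3 (\<omega> a) x - cross3 (\<omega> a) a) has_derivative (\<lambda>h. cross3 (\<omega> a) h)) (at b)"
      by (rule has_derivative_eq_rhs, rule derivative_intros bounded_linear.has_derivative[OF bl_cross3] has_derivative_ident)+ auto
    then show ?thesis by (simp add: Cross3.right_diff_distrib)
  qed
  have nz: "4 * pi * norm (a - b) ^ 3 \<noteq> 0" using ab' by simp
  note p1 = has_derivative_power[OF n, of 3]
  note p2 = has_derivative_mult[OF has_derivative_const[of "4 * pi"] p1]
  note k = Deriv.has_derivative_inverse[OF nz p2]
  have e: "ind_vel \<omega> a = (\<lambda>x. inverse (4 * pi * norm (a - x) ^ 3) *\<^sub>R cross3 (\<omega> a) (x - a))"
    by (simp add: ind_vel_def inverse_eq_divide fun_eq_iff)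
  show ?thesis unfolding e using has_derivative_scaleR[OF k cr] by blast
qed

lemma pointwise:
  assumes ba: "b \<noteq> a" and bc: "b \<noteq> c"
    and dva: "(ind_vel \<omega> a has_derivative dva) (at b)"
    and dvc: "(ind_vel \<omega> c has_derivative dvc) (at b)"
  shows "Dact \<omega> a b c + Dact \<omega> c b a =
     dWv (\<omega> c) (c - b) (- \<omega> b) \<bullet> ind_vel \<omega> a b + Wv (\<omega> c) (c - b) \<bullet> dva (\<omega> b)
   + dWv (\<omega> a) (a - b) (- \<omega> b) \<bullet> ind_vel \<omega> c b + Wv (\<omega> a) (a - b) \<bullet> dvc (\<omega> b)"
proof -
  define \<beta> where "\<beta> = \<omega> b"
  define A where "A = \<omega> a"
  define C where "C = \<omega> c"
  define u where "u = ind_vel \<omega> a b"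
  define w where "w = ind_vel \<omega> c b"
  define na where "na = norm (a - b)"
  define nc where "nc = norm (c - b)"
  have na0: "na \<noteq> 0" using ba by (simp add: na_def)
  have nc0: "nc \<noteq> 0" using bc by (simp add: nc_def)
  have u: "u = (1 / (4 * pi * na ^ 3)) *\<^sub>R cross3 A (b - a)"
    by (simp add: u_def ind_vel_def na_def A_def)
  have w: "w = (1 / (4 * pi * nc ^ 3)) *\<^sub>R cross3 C (b - c)"
    by (simp add: w_def ind_vel_def nc_def C_def norm_minus_commute)
  define X where "X = ((c - b) \<bullet> cross3 A (b - a)) * (\<beta> \<bullet> C) - (C \<bullet> cross3 A (b - a)) * (\<beta> \<bullet> (c - b))"
  define Y where "Y = ((a - b) \<bullet> cross3 C (b - c)) * (\<beta> \<bullet> A) - (A \<bullet> cross3 C (b - c)) * (\<beta> \<bullet> (a - b))"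
  have XY: "X + Y = 0" unfolding X_def Y_def using core_id[of c b A a \<beta> C] by simp
  have e1: "\<beta> \<bullet> dWv C (c - b) (- u) - u \<bullet> dWv C (c - b) (- \<beta>) = X / (32 * pi^2 * na^3 * nc^3)"
    unfolding antisym_dW u X_def
    by (simp add: inner_commute nc_def[symmetric] power2_eq_square field_simps na0 nc0)
  have e2: "\<beta> \<bullet> dWv A (a - b) (- w) - w \<bullet> dWv A (a - b) (- \<beta>) = Y / (32 * pi^2 * na^3 * nc^3)"
    unfolding antisym_dW w Y_def
    by (simp add: inner_commute na_def[symmetric] power2_eq_square field_simps na0 nc0)
  have "Dact \<omega> a b c + Dact \<omega> c b a =
     \<beta> \<bullet> dWv C (c - b) (- u) + dva \<beta> \<bullet> Wv C (c - b)
   + \<beta> \<bullet> dWv A (a - b) (- w) + dvc \<beta> \<bullet> Wv A (a - b)"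
    unfolding Dact_formula[OF bc dva] Dact_formula[OF ba dvc] \<beta>_def A_def C_def u_def w_def by simp
  also have "\<dots> = u \<bullet> dWv C (c - b) (- \<beta>) + Wv C (c - b) \<bullet> dva \<beta>
   + w \<bullet> dWv A (a - b) (- \<beta>) + Wv A (a - b) \<bullet> dvc \<beta>
   + (X + Y) / (32 * pi^2 * na^3 * nc^3)"
    using e1 e2 by (simp add: inner_commute add_divide_distrib)
  finally show ?thesis using XY by (simp add: inner_commute \<beta>_def A_def C_def u_def w_def)
qed


lemma Wv_shift_deriv:
  assumes "b \<noteq> c"
  shows "((\<lambda>x. Wv g (c - x)) has_derivative (\<lambda>h. dWv g (c - b) (- h))) (at b)"
proof -
  have cb: "c - b \<noteq> 0" using assms by simp
  have d0: "((\<lambda>x. c - x) has_derivative (\<lambda>h. - h)) (at b)"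
    by (auto intro!: derivative_eq_intros)
  show ?thesis using has_derivative_compose[OF d0 Wv_deriv[OF cb]] by simp
qed

theorem proposition2:
  fixes \<omega> :: "real^3 \<Rightarrow> real^3" and \<gamma> :: "real \<Rightarrow> real^3"
    and a c :: "real^3" and T :: real
  assumes "smooth3 \<omega>" and "div_free \<omega>"
    and "T > 0"
    and "\<forall>s. \<gamma> (s + T) = \<gamma> s"
    and "\<forall>s. (\<gamma> has_vector_derivative \<omega> (\<gamma> s)) (at s)"
    and "a \<notin> range \<gamma>" and "c \<notin> range \<gamma>" and "a \<noteq> c"
  shows "integral {0..T} (\<lambda>s. Dact \<omega> a (\<gamma> s) c)
       = - integral {0..T} (\<lambda>s. Dact \<omega> c (\<gamma> s) a)"
proof -
  note per = assms(4) and gd = assms(5)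
  have ga: "\<gamma> s \<noteq> a" for s using assms(6) by auto
  have gc: "\<gamma> s \<noteq> c" for s using assms(7) by auto
  define G where "G b = Wv (\<omega> c) (c - b) \<bullet> ind_vel \<omega> a b + Wv (\<omega> a) (a - b) \<bullet> ind_vel \<omega> c b" for b
  define f1 where "f1 s = Dact \<omega> a (\<gamma> s) c" for s
  define f2 where "f2 s = Dact \<omega> c (\<gamma> s) a" for s
  define g where "g s = G (\<gamma> s)" for s
  have deriv: "(g has_vector_derivative (f1 s + f2 s)) (at s)" for s
  proof -
    define b where "b = \<gamma> s"
    have ba: "b \<noteq> a" and bc: "b \<noteq> c" using ga gc by (auto simp: b_def)
    obtain dva where dva: "(ind_vel \<omega> a has_derivative dva) (at b)" using ind_vel_deriv[OF ba] by blast
    obtain dvc where dvc: "(ind_vel \<omega> c has_derivative dvc) (at b)" using ind_vel_deriv[OF bc] by blast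
    define DG where "DG h = dWv (\<omega> c) (c - b) (- h) \<bullet> ind_vel \<omega> a b + Wv (\<omega> c) (c - b) \<bullet> dva h
      + dWv (\<omega> a) (a - b) (- h) \<bullet> ind_vel \<omega> c b + Wv (\<omega> a) (a - b) \<bullet> dvc h" for h
    have dG: "(G has_derivative DG) (at b)"
      unfolding G_def[abs_def]
      apply (rule has_derivative_eq_rhs)
       apply (rule has_derivative_add has_derivative_inner Wv_shift_deriv dva dvc bc ba)+
      apply (auto simp: DG_def inner_commute)
      done
    have lin: "linear DG" using dG has_derivative_linear by blast
    have dgam: "(\<gamma> has_derivative (\<lambda>t. t *\<^sub>R \<omega> b)) (at s)"
      using gd unfolding has_vector_derivative_def b_def by blast
    have "(g has_derivative (\<lambda>t. DG (t *\<^sub>R \<omega> b))) (at s)"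
      unfolding g_def using has_derivative_compose[OF dgam, of G DG] dG by (simp add: b_def)
    moreover have "(\<lambda>t. DG (t *\<^sub>R \<omega> b)) = (\<lambda>t. t *\<^sub>R DG (\<omega> b))"
      using linear_scale[OF lin] by auto
    moreover have "DG (\<omega> b) = f1 s + f2 s"
      unfolding f1_def f2_def DG_def pointwise[OF ba bc dva dvc, folded b_def] b_def[symmetric]
      by simp
    ultimately show ?thesis unfolding has_vector_derivative_def by simp
  qed
  have gT: "g T = g 0" unfolding g_def using per[rule_format, of 0] by simp
  have hi: "((\<lambda>s. f1 s + f2 s) has_integral 0) {0..T}"
    using fundamental_theorem_of_calculus[of 0 T g "\<lambda>s. f1 s + f2 s"] assms(3) deriv gT
    by (auto intro: has_vector_derivative_at_within)
  show ?thesis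
  proof (cases "f1 integrable_on {0..T}")
    case True
    have i2: "f2 integrable_on {0..T}"
    proof -
      have "(\<lambda>s. (f1 s + f2 s) - f1 s) integrable_on {0..T}"
        using integrable_diff[OF has_integral_integrable[OF hi] True] .
      then show ?thesis by simp
    qed
    have "integral {0..T} f1 + integral {0..T} f2 = 0"
      using integral_add[OF True i2] integral_unique[OF hi] by simp
    then show ?thesis unfolding f1_def f2_def by simp
  next
    case False
    have n2: "\<not> f2 integrable_on {0..T}"
    proof
      assume i2: "f2 integrable_on {0..T}"
      have "(\<lambda>s. (f1 s + f2 s) - f2 s) integrable_on {0..T}"
        using integrable_diff[OF has_integral_integrable[OF hi] i2] .
      then show False using False by simp
    qed
    show ?thesis using False n2 not_integrable_integral unfolding f1_def[abs_def] f2_def[abs_def]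
      by (metis neg_0_equal_iff_equal)
  qed
qed

end
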